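(* For every $\epsilon>0$ and every $m\in\mathbb N$ there exist $\delta>0$ and $n_0\in\mathbb N$ such that the following holds. If $n>n_0$ and $\sigma\in S_n$ has at most $n^{\delta}$ cycles of length $i$ for each $i<m$, then $E(\sigma)\le 1/m+\epsilon$.
   Context: For $\sigma\in S_n$ let $f_\sigma(i)$ be the number of $i$-cycles of $\sigma$ (fixed points are $1$-cycles). Define $e_1,\dots,e_n$ by $e_1+\cdots+e_k=\max\left(\frac{\log\left(\sum_{i=1}^k i f_\sigma(i)\right)}{\log n},0\right)$ for $1\le k\le n$ (with $\log 0=-\infty$), and set $E(\sigma)=\sum_{i=1}^n e_i/i$. *)

theory Defs
  imports "HOL-Analysis.Analysis" "HOL-Combinatorics.Combinatorics"
begin

text \<open>Permutations in S_n are functions sigma with sigma permutes {1..n}.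
  The cycles of sigma are its orbits on {1..n} (fixed points give 1-cycles).\<close>

definition cycles_of :: "nat \<Rightarrow> (nat \<Rightarrow> nat) \<Rightarrow> nat set set" where
  "cycles_of n \<sigma> = (\<lambda>x. orbit \<sigma> x) ` {1..n}"

definition cyc_count :: "nat \<Rightarrow> (nat \<Rightarrow> nat) \<Rightarrow> nat \<Rightarrow> nat" where
  "cyc_count n \<sigma> i = card {C \<in> cycles_of n \<sigma>. card C = i}"

text \<open>Partial sums e_1 + ... + e_k = max(log(sum_{i=1}^k i f(i)) / log n, 0),
  with log 0 = -infinity (so the value is 0 when the inner sum is 0).\<close>
definition E_partial :: "nat \<Rightarrow> (nat \<Rightarrow> nat) \<Rightarrow> nat \<Rightarrow> real" where
  "E_partial n \<sigma> k =
     (let s = (\<Sum>i=1..k. i * cyc_count n \<sigma> i)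
      in if s = 0 then 0 else max (ln (real s) / ln (real n)) 0)"

definition e_coef :: "nat \<Rightarrow> (nat \<Rightarrow> nat) \<Rightarrow> nat \<Rightarrow> real" where
  "e_coef n \<sigma> k = E_partial n \<sigma> k - E_partial n \<sigma> (k - 1)"

definition E_val :: "nat \<Rightarrow> (nat \<Rightarrow> nat) \<Rightarrow> real" where
  "E_val n \<sigma> = (\<Sum>i=1..n. e_coef n \<sigma> i / real i)"

end

theory Submission
  imports Defs
begin

lemma cyc_props:
  assumes "\<sigma> permutes {1..n}"
  shows "finite (cycles_of n \<sigma>)" "pairwise disjnt (cycles_of n \<sigma>)"
        "\<And>C. C \<in> cycles_of n \<sigma> \<Longrightarrow> finite C \<and> C \<subseteq> {1..n}"
proof -
  show "finite (cycles_of n \<sigma>)" unfolding cycles_of_def by simp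
  have cyc: "\<And>x. cyclic_on \<sigma> (orbit \<sigma> x)" using cyclic_on_orbit[OF assms] by simp
  show "pairwise disjnt (cycles_of n \<sigma>)"
  proof (rule pairwiseI)
    fix A B assume A: "A \<in> cycles_of n \<sigma>" and B: "B \<in> cycles_of n \<sigma>" and ne: "A \<noteq> B"
    obtain x where x: "A = orbit \<sigma> x" using A unfolding cycles_of_def by auto
    obtain z where z: "B = orbit \<sigma> z" using B unfolding cycles_of_def by auto
    show "disjnt A B" unfolding disjnt_def
    proof (rule ccontr)
      assume "A \<inter> B \<noteq> {}"
      then obtain y where y: "y \<in> orbit \<sigma> x" "y \<in> orbit \<sigma> z" using x z by auto
      have "orbit \<sigma> y = orbit \<sigma> x" using orbit_cyclic_eq3[OF cyc y(1)] .
      moreover have "orbit \<sigma> y = orbit \<sigma> z" using orbit_cyclic_eq3[OF cyc y(2)] .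
      ultimately show False using ne x z by simp
    qed
  qed
  fix C assume "C \<in> cycles_of n \<sigma>"
  then obtain x where x: "x \<in> {1..n}" "C = orbit \<sigma> x" unfolding cycles_of_def by auto
  then have "C \<subseteq> {1..n}" using permutes_orbit_subset[OF assms] by simp
  then show "finite C \<and> C \<subseteq> {1..n}" using finite_subset by blast
qed

lemma S_le_n:
  assumes "\<sigma> permutes {1..n}"
  shows "(\<Sum>i=1..k. i * cyc_count n \<sigma> i) \<le> n"
proof -
  let ?Cy = "cycles_of n \<sigma>"
  note P = cyc_props[OF assms]
  let ?A = "{C \<in> ?Cy. card C \<in> {1..k}}"
  have finA: "finite ?A" using P(1) by simp
  have "(\<Sum>i=1..k. i * cyc_count n \<sigma> i) = (\<Sum>i=1..k. \<Sum>C\<in>{C\<in>?A. card C = i}. card C)"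
  proof (rule sum.cong[OF refl])
    fix i assume i: "i \<in> {1..k}"
    have e: "{C\<in>?A. card C = i} = {C \<in> ?Cy. card C = i}" using i by auto
    show "i * cyc_count n \<sigma> i = (\<Sum>C\<in>{C\<in>?A. card C = i}. card C)"
      unfolding e cyc_count_def by simp
  qed
  also have "\<dots> = (\<Sum>C\<in>?A. card C)"
    by (rule sum.group) (use finA in auto)
  also have "\<dots> \<le> (\<Sum>C\<in>?Cy. card C)"
    by (rule sum_mono2[OF P(1)]) auto
  also have "\<dots> = card (\<Union>?Cy)"
    using card_Union_disjoint[OF P(2)] P(3) by simp
  also have "\<dots> \<le> card {1..n}"
    by (rule card_mono) (use P(3) in auto)
  finally show ?thesis by simp
qed

lemma abel_step:
  fixes a :: "nat \<Rightarrow> real"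
  assumes "N \<ge> 1"
  shows "(\<Sum>i=1..Suc N. (a i - a (i-1)) / real i) - a (Suc N) / real (Suc N)
       = ((\<Sum>i=1..N. (a i - a (i-1)) / real i) - a N / real N) + a N * (1 / real N - 1 / real (Suc N))"
proof -
  have "(\<Sum>i=1..Suc N. (a i - a (i-1)) / real i) = (\<Sum>i=1..N. (a i - a (i-1)) / real i) + (a (Suc N) - a N) / real (Suc N)"
    using assms by simp
  moreover have "(a (Suc N) - a N) / real (Suc N) - a (Suc N) / real (Suc N) = - a N / real N + a N * (1 / real N - 1 / real (Suc N))"
    by (simp add: diff_divide_distrib right_diff_distrib)
  ultimately show ?thesis by simp
qed

lemma abel_T:
  fixes a :: "nat \<Rightarrow> real" and B :: real
  assumes a0: "a 0 = 0" and Bge: "B \<ge> 0" and m1: "m \<ge> 1"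
    and aB: "\<And>i. 1 \<le> i \<Longrightarrow> i < m \<Longrightarrow> a i \<le> B"
    and a1: "\<And>i. 1 \<le> i \<Longrightarrow> a i \<le> 1"
    and N: "N \<ge> 1"
  shows "(\<Sum>i=1..N. (a i - a (i-1)) / real i) - a N / real N
     \<le> (if N \<le> m then B * (1 - 1 / real N) else B * (1 - 1 / real m) + 1 / real m - 1 / real N)"
  using N
proof (induction N rule: nat_induct_at_least)
  case base
  then show ?case using a0 m1 by simp
next
  case (Suc N)
  note IH = Suc.IH
  have pos: "1 / real N - 1 / real (Suc N) \<ge> 0" using Suc.hyps by (simp add: field_simps)
  show ?case
  proof (cases "Suc N \<le> m")
    case True
    then have "a N \<le> B" using aB Suc.hyps by simp
    then have "a N * (1 / real N - 1 / real (Suc N)) \<le> B * (1 / real N - 1 / real (Suc N))"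
      using pos mult_right_mono by blast
    then show ?thesis using IH True unfolding abel_step[OF Suc.hyps] by (simp add: algebra_simps)
  next
    case False
    then have "a N \<le> 1" using a1 Suc.hyps by simp
    then have c: "a N * (1 / real N - 1 / real (Suc N)) \<le> 1 / real N - 1 / real (Suc N)"
      using pos mult_right_mono by fastforce
    show ?thesis
    proof (cases "N = m")
      case True
      then show ?thesis using IH c False unfolding abel_step[OF Suc.hyps] by (simp add: algebra_simps)
    next
      case False2: False
      then have "\<not> N \<le> m" using False by simp
      then show ?thesis using IH c False unfolding abel_step[OF Suc.hyps] by (simp add: algebra_simps)
    qed
  qed
qed

lemma abel_bound:
  fixes a :: "nat \<Rightarrow> real" and B :: real
  assumes a0: "a 0 = 0" and Bge: "B \<ge> 0" and m1: "m \<ge> 1"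
    and aB: "\<And>i. 1 \<le> i \<Longrightarrow> i < m \<Longrightarrow> a i \<le> B"
    and a1: "\<And>i. 1 \<le> i \<Longrightarrow> a i \<le> 1"
    and N: "N \<ge> m"
  shows "(\<Sum>i=1..N. (a i - a (i-1)) / real i) \<le> B + 1 / real m"
proof -
  have N1: "N \<ge> 1" using N m1 by simp
  note T = abel_T[of a B m N, OF a0 Bge m1 aB a1 N1]
  have aN: "a N / real N \<le> 1 / real N" using a1[OF N1] N1 by (simp add: divide_right_mono)
  have Bm: "B * (1 - 1 / real m) \<le> B" using Bge m1 by (simp add: mult_left_le)
  have mN: "1 / real N \<le> 1 / real m" using N m1 by (simp add: frac_le)
  show ?thesis
  proof (cases "N = m")
    case True
    then show ?thesis using T aN Bm by simp
  next
    case False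
    then have "\<not> N \<le> m" using N by simp
    then show ?thesis using T aN Bm by simp
  qed
qed

lemma E_partial_le1:
  assumes "\<sigma> permutes {1..n}" "n \<ge> 2"
  shows "E_partial n \<sigma> k \<le> 1"
proof -
  define S where "S = (\<Sum>i=1..k. i * cyc_count n \<sigma> i)"
  have Sn: "S \<le> n" using S_le_n[OF assms(1)] S_def by simp
  have lnpos: "ln (real n) > 0" using assms(2) by simp
  show ?thesis
  proof (cases "S = 0")
    case True then show ?thesis unfolding E_partial_def S_def[symmetric] by simp
  next
    case False
    then have "ln (real S) \<le> ln (real n)" using Sn by simp
    then have "ln (real S) / ln (real n) \<le> 1" using lnpos by simp
    then show ?thesis using False unfolding E_partial_def S_def[symmetric] by simp
  qed
qed

lemma E_partial_small:
  assumes "n \<ge> 2" "m \<ge> 1" "k < m" "\<delta> > 0"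
    and cnt: "\<forall>i<m. real (cyc_count n \<sigma> i) \<le> real n powr \<delta>"
  shows "E_partial n \<sigma> k \<le> \<delta> + 2 * ln (real m) / ln (real n)"
proof -
  define S where "S = (\<Sum>i=1..k. i * cyc_count n \<sigma> i)"
  have lnpos: "ln (real n) > 0" using assms(1) by simp
  have lnm: "ln (real m) \<ge> 0" using assms(2) by simp
  have "real S = (\<Sum>i=1..k. real i * real (cyc_count n \<sigma> i))" unfolding S_def by simp
  also have "\<dots> \<le> (\<Sum>i=1..k. real m * real n powr \<delta>)"
  proof (rule sum_mono)
    fix i assume i: "i \<in> {1..k}"
    then have "i < m" using assms(3) by simp
    then have "real (cyc_count n \<sigma> i) \<le> real n powr \<delta>" using cnt by simp
    moreover have "real i \<le> real m" using \<open>i < m\<close> by simp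
    ultimately show "real i * real (cyc_count n \<sigma> i) \<le> real m * real n powr \<delta>"
      by (simp add: mult_mono)
  qed
  also have "\<dots> = real k * real m * real n powr \<delta>" by simp
  also have "\<dots> \<le> real m * real m * real n powr \<delta>"
    using assms(3) by (intro mult_right_mono) auto
  finally have Sb: "real S \<le> real m * real m * real n powr \<delta>" .
  show ?thesis
  proof (cases "S = 0")
    case True then show ?thesis unfolding E_partial_def S_def[symmetric] using lnpos lnm assms(4) by simp
  next
    case False
    then have "ln (real S) \<le> ln (real m * real m * real n powr \<delta>)" using Sb by simp
    also have "\<dots> = 2 * ln (real m) + \<delta> * ln (real n)"
      using assms(1,2) by (simp add: ln_mult ln_powr)
    finally have "ln (real S) / ln (real n) \<le> (2 * ln (real m) + \<delta> * ln (real n)) / ln (real n)"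
      using lnpos by (simp add: divide_right_mono)
    also have "\<dots> = \<delta> + 2 * ln (real m) / ln (real n)" using lnpos by (simp add: field_simps)
    finally show ?thesis using False lnpos lnm assms(4) unfolding E_partial_def S_def[symmetric] by simp
  qed
qed

theorem lemma2p6:
  fixes \<epsilon> :: real and m :: nat
  assumes "\<epsilon> > 0" and "m \<ge> 1"
  shows "\<exists>\<delta>::real. \<delta> > 0 \<and> (\<exists>n0::nat. \<forall>n::nat. \<forall>\<sigma>::nat \<Rightarrow> nat.
           n > n0 \<longrightarrow> \<sigma> permutes {1..n} \<longrightarrow>
           (\<forall>i<m. real (cyc_count n \<sigma> i) \<le> real n powr \<delta>) \<longrightarrow>
           E_val n \<sigma> \<le> 1 / real m + \<epsilon>)"
proof (intro exI conjI allI impI)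
  show "\<epsilon> / 2 > 0" using assms by simp
  define n0 where "n0 = max m (nat \<lceil>exp (4 * ln (real m) / \<epsilon>)\<rceil>) + 2"
  fix n :: nat and \<sigma> :: "nat \<Rightarrow> nat"
  assume n: "n > n0" and perm: "\<sigma> permutes {1..n}"
    and cnt: "\<forall>i<m. real (cyc_count n \<sigma> i) \<le> real n powr (\<epsilon> / 2)"
  have n2: "n \<ge> 2" and nm: "n \<ge> m" using n n0_def by auto
  have "real n > exp (4 * ln (real m) / \<epsilon>)"
  proof -
    have "real (nat \<lceil>exp (4 * ln (real m) / \<epsilon>)\<rceil>) < real n" using n n0_def by simp
    moreover have "exp (4 * ln (real m) / \<epsilon>) \<le> real (nat \<lceil>exp (4 * ln (real m) / \<epsilon>)\<rceil>)"
      by (rule real_nat_ceiling_ge)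
    ultimately show ?thesis by linarith
  qed
  then have "ln (real n) > 4 * ln (real m) / \<epsilon>"
  proof -
    have "ln (exp (4 * ln (real m) / \<epsilon>)) < ln (real n)"
      using \<open>real n > exp (4 * ln (real m) / \<epsilon>)\<close> using n2 by (subst ln_less_cancel_iff) auto
    then show ?thesis by simp
  qed
  then have lnb: "4 * ln (real m) < \<epsilon> * ln (real n)" using assms(1) by (simp add: pos_divide_less_eq mult.commute)
  have lnpos: "ln (real n) > 0" using n2 by simp
  have c: "2 * ln (real m) / ln (real n) \<le> \<epsilon> / 2"
    using lnb lnpos by (simp add: pos_divide_le_eq)
  let ?a = "E_partial n \<sigma>"
  have a0: "?a 0 = 0" unfolding E_partial_def by simp
  have "E_val n \<sigma> = (\<Sum>i=1..n. (?a i - ?a (i-1)) / real i)"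
    unfolding E_val_def e_coef_def by simp
  also have "\<dots> \<le> \<epsilon> + 1 / real m"
  proof (rule abel_bound[of ?a \<epsilon> m n, OF a0 _ assms(2) _ _ nm])
    show "0 \<le> \<epsilon>" using assms by simp
    show "\<And>i. 1 \<le> i \<Longrightarrow> ?a i \<le> 1" using E_partial_le1[OF perm n2] by simp
    fix i assume "1 \<le> i" "i < m"
    then have "?a i \<le> \<epsilon> / 2 + 2 * ln (real m) / ln (real n)"
      using E_partial_small[OF n2 assms(2) _ _ cnt] assms(1) by simp
    then show "?a i \<le> \<epsilon>" using c by simp
  qed
  finally show "E_val n \<sigma> \<le> 1 / real m + \<epsilon>" by simp
qed

end
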